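(* For every positive integer $n$, the Chinese monoid $\mathsf{Ch}_n$ satisfies every semigroup identity that is satisfied by the monoid $\mathcal U_2(\mathbb T)$ of $2\times 2$ upper triangular tropical matrices.
   Context: The Chinese monoid of rank $n$ is the monoid $\mathsf{Ch}_n=\langle a_1,\dots,a_n\rangle$ presented by the relations $a_ja_ka_i=a_ka_ja_i=a_ka_ia_j$ for all $1\le i\le j\le k\le n$. The tropical semiring is $\mathbb T=\mathbb R\cup\{-\infty\}$ with addition $\max$ and multiplication $+$; $\mathcal U_2(\mathbb T)$ is the monoid of $2\times2$ matrices over $\mathbb T$ with lower-left entry $-\infty$, under the max-plus matrix product. A semigroup identity is a pair $u=v$ of nonempty words over an alphabet $\mathcal A$; a semigroup $\mathcal S$ satisfies it if $\phi(u)=\phi(v)$ for every semigroup homomorphism $\phi:\mathcal A^+\to\mathcal S$. *)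

theory Defs
  imports Main "HOL.Real"
begin

datatype trop = NegInf | Fin real

fun tadd :: "trop \<Rightarrow> trop \<Rightarrow> trop" where
  "tadd NegInf y = y"
| "tadd x NegInf = x"
| "tadd (Fin a) (Fin b) = Fin (max a b)"

fun tmul :: "trop \<Rightarrow> trop \<Rightarrow> trop" where
  "tmul NegInf y = NegInf"
| "tmul x NegInf = NegInf"
| "tmul (Fin a) (Fin b) = Fin (a + b)"

text \<open>TM a11 a12 a21 a22 is the matrix with rows (a11 a12), (a21 a22).\<close>
datatype tmat2 = TM trop trop trop trop

fun tmat_mult :: "tmat2 \<Rightarrow> tmat2 \<Rightarrow> tmat2" where
  "tmat_mult (TM a11 a12 a21 a22) (TM b11 b12 b21 b22) =
     TM (tadd (tmul a11 b11) (tmul a12 b21)) (tadd (tmul a11 b12) (tmul a12 b22))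
        (tadd (tmul a21 b11) (tmul a22 b21)) (tadd (tmul a21 b12) (tmul a22 b22))"

definition U2T :: "tmat2 set" where
  "U2T = {TM a b NegInf d | a b d. True}"

text \<open>Image of a nonempty word under the semigroup homomorphism A^+ \<rightarrow> U_2(T)
  determined by the letter images phi.\<close>
fun eval_tmat :: "('a \<Rightarrow> tmat2) \<Rightarrow> 'a list \<Rightarrow> tmat2" where
  "eval_tmat phi [x] = phi x"
| "eval_tmat phi (x # y # ys) = tmat_mult (phi x) (eval_tmat phi (y # ys))"
| "eval_tmat phi [] = undefined"

definition U2T_satisfies :: "'a list \<Rightarrow> 'a list \<Rightarrow> bool" where
  "U2T_satisfies u v \<longleftrightarrow>
     (\<forall>phi. (\<forall>x. phi x \<in> U2T) \<longrightarrow> eval_tmat phi u = eval_tmat phi v)"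

text \<open>Words over generators a_1..a_n are nat lists with letters in {1..n};
  the Chinese congruence is the least congruence on such words containing
  a_j a_k a_i = a_k a_j a_i = a_k a_i a_j for 1 \<le> i \<le> j \<le> k \<le> n.\<close>
inductive chinese_cong :: "nat \<Rightarrow> nat list \<Rightarrow> nat list \<Rightarrow> bool" for n where
  rel1: "\<lbrakk>1 \<le> i; i \<le> j; j \<le> k; k \<le> n\<rbrakk> \<Longrightarrow>
         chinese_cong n (p @ [j, k, i] @ q) (p @ [k, j, i] @ q)"
| rel2: "\<lbrakk>1 \<le> i; i \<le> j; j \<le> k; k \<le> n\<rbrakk> \<Longrightarrow>
         chinese_cong n (p @ [k, j, i] @ q) (p @ [k, i, j] @ q)"
| refl: "chinese_cong n w w"
| sym: "chinese_cong n w w' \<Longrightarrow> chinese_cong n w' w"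
| trans: "chinese_cong n w w' \<Longrightarrow> chinese_cong n w' w'' \<Longrightarrow> chinese_cong n w w''"

text \<open>Ch_n satisfies u = v: for every semigroup homomorphism A^+ \<rightarrow> Ch_n,
  given by letter images \<sigma> x (representative words over {1..n}, possibly empty,
  i.e. possibly the identity), the images of u and v coincide in Ch_n.\<close>
definition chinese_satisfies :: "nat \<Rightarrow> 'a list \<Rightarrow> 'a list \<Rightarrow> bool" where
  "chinese_satisfies n u v \<longleftrightarrow>
     (\<forall>\<sigma> :: 'a \<Rightarrow> nat list. (\<forall>x. set (\<sigma> x) \<subseteq> {1..n}) \<longrightarrow>
        chinese_cong n (concat (map \<sigma> u)) (concat (map \<sigma> v)))"

end

theory Submission
  imports Defs
begin

lemma cong_app:
  assumes "chinese_cong n w w'"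
  shows "chinese_cong n (x @ w @ y) (x @ w' @ y)"
  using assms
proof (induction rule: chinese_cong.induct)
  case (rel1 i j k p q)
  from chinese_cong.rel1[OF rel1(1-4), of "x @ p" "q @ y"] show ?case by simp
next
  case (rel2 i j k p q)
  from chinese_cong.rel2[OF rel2(1-4), of "x @ p" "q @ y"] show ?case by simp
next
  case (refl w) show ?case by (rule chinese_cong.refl)
next
  case (sym w w') then show ?case by (metis chinese_cong.sym)
next
  case (trans w w' w'') then show ?case by (metis chinese_cong.trans)
qed

lemma cong_appL: "chinese_cong n w w' \<Longrightarrow> chinese_cong n (x @ w) (x @ w')"
  using cong_app[of n w w' x "[]"] by simp

lemma cong_appR: "chinese_cong n w w' \<Longrightarrow> chinese_cong n (w @ y) (w' @ y)"
  using cong_app[of n w w' "[]" y] by simp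

lemma cong_mono:
  assumes "chinese_cong m w w'" "m \<le> n"
  shows "chinese_cong n w w'"
  using assms
proof (induction rule: chinese_cong.induct)
  case (rel1 i j k p q) then show ?case by (intro chinese_cong.rel1) auto
next
  case (rel2 i j k p q) then show ?case by (intro chinese_cong.rel2) auto
next
  case (refl w) show ?case by (rule chinese_cong.refl)
next
  case (sym w w') then show ?case by (metis chinese_cong.sym)
next
  case (trans w w' w'') then show ?case by (metis chinese_cong.trans)
qed

lemma r1: "\<lbrakk>1 \<le> i; i \<le> j; j \<le> k; k \<le> n\<rbrakk> \<Longrightarrow> chinese_cong n [j,k,i] [k,j,i]"
  using chinese_cong.rel1[of i j k n "[]" "[]"] by simp

lemma r2: "\<lbrakk>1 \<le> i; i \<le> j; j \<le> k; k \<le> n\<rbrakk> \<Longrightarrow> chinese_cong n [k,j,i] [k,i,j]"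
  using chinese_cong.rel2[of i j k n "[]" "[]"] by simp

lemma letter_pair: "\<lbrakk>1 \<le> j; j \<le> t; t \<le> n\<rbrakk> \<Longrightarrow> chinese_cong n [n,j,t] [t,n,j]"
  by (meson chinese_cong.sym chinese_cong.trans order_refl r1 r2)

lemma pair_pair: "\<lbrakk>1 \<le> a; a \<le> b; b \<le> n\<rbrakk> \<Longrightarrow> chinese_cong n ([n,a] @ [n,b]) ([n,b] @ [n,a])"
proof -
  assume h: "1 \<le> a" "a \<le> b" "b \<le> n"
  have 1: "chinese_cong n [n,a,n] [n,n,a]" using letter_pair[of a n n] h by simp
  have 2: "chinese_cong n [n,a,b] [b,n,a]" using letter_pair[of a b n] h by simp
  have "chinese_cong n ([n,a,n] @ [b]) ([n,n,a] @ [b])" by (rule cong_appR[OF 1])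
  moreover have "chinese_cong n ([n] @ [n,a,b]) ([n] @ [b,n,a])" by (rule cong_appL[OF 2])
  ultimately show ?thesis by (simp add: chinese_cong.trans)
qed

fun pr :: "nat \<Rightarrow> (nat \<Rightarrow> nat) \<Rightarrow> nat \<Rightarrow> nat list" where
  "pr n c 0 = []"
| "pr n c (Suc m) = pr n c m @ concat (replicate (c (Suc m)) [n, Suc m])"

lemma pr_cong: "(\<And>j. 1 \<le> j \<Longrightarrow> j \<le> m \<Longrightarrow> c j = c' j) \<Longrightarrow> pr n c m = pr n c' m"
  by (induction m) auto

lemma pr_zero: "pr n (\<lambda>_. 0) m = []"
  by (induction m) auto

lemma ctrans: "chinese_cong n a b \<Longrightarrow> chinese_cong n b c \<Longrightarrow> chinese_cong n a c"
  by (rule chinese_cong.trans)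

lemma csym: "chinese_cong n a b \<Longrightarrow> chinese_cong n b a"
  by (rule chinese_cong.sym)

lemma letter_rep:
  assumes "1 \<le> j" "j \<le> t" "t \<le> n"
  shows "chinese_cong n (concat (replicate k [n,j]) @ [t]) ([t] @ concat (replicate k [n,j]))"
proof (induction k)
  case 0 then show ?case by (simp add: chinese_cong.refl)
next
  case (Suc k)
  have "chinese_cong n ([n,j] @ (concat (replicate k [n,j]) @ [t])) ([n,j] @ ([t] @ concat (replicate k [n,j])))"
    by (rule cong_appL[OF Suc])
  moreover have "chinese_cong n ([n,j,t] @ concat (replicate k [n,j])) ([t,n,j] @ concat (replicate k [n,j]))"
    by (rule cong_appR[OF letter_pair[OF assms]])
  ultimately show ?case by (auto intro: ctrans)
qed

lemma letter_pr:
  assumes "m \<le> t" "t \<le> n"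
  shows "chinese_cong n (pr n c m @ [t]) ([t] @ pr n c m)"
  using assms
proof (induction m)
  case 0 then show ?case by (simp add: chinese_cong.refl)
next
  case (Suc m)
  let ?R = "concat (replicate (c (Suc m)) [n, Suc m])"
  have "chinese_cong n (pr n c m @ (?R @ [t])) (pr n c m @ ([t] @ ?R))"
    by (rule cong_appL[OF letter_rep]) (use Suc in auto)
  moreover have "chinese_cong n ((pr n c m @ [t]) @ ?R) (([t] @ pr n c m) @ ?R)"
    by (rule cong_appR) (use Suc in auto)
  ultimately show ?case by (auto intro: ctrans)
qed

lemma pair_rep:
  assumes "1 \<le> a" "a \<le> b" "b \<le> n"
  shows "chinese_cong n (concat (replicate k [n,b]) @ [n,a]) ([n,a] @ concat (replicate k [n,b]))"
proof (induction k)
  case 0 then show ?case by (simp add: chinese_cong.refl)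
next
  case (Suc k)
  have "chinese_cong n ([n,b] @ (concat (replicate k [n,b]) @ [n,a])) ([n,b] @ ([n,a] @ concat (replicate k [n,b])))"
    by (rule cong_appL[OF Suc])
  moreover have "chinese_cong n (([n,b] @ [n,a]) @ concat (replicate k [n,b])) (([n,a] @ [n,b]) @ concat (replicate k [n,b]))"
    by (rule cong_appR[OF csym[OF pair_pair[OF assms]]])
  ultimately show ?case by (auto intro: ctrans)
qed

lemma n_rep:
  assumes "1 \<le> x" "x \<le> n"
  shows "chinese_cong n (replicate k n @ [n,x]) ([n,x] @ replicate k n)"
proof (induction k)
  case 0 then show ?case by (simp add: chinese_cong.refl)
next
  case (Suc k)
  have "chinese_cong n ([n] @ (replicate k n @ [n,x])) ([n] @ ([n,x] @ replicate k n))"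
    by (rule cong_appL[OF Suc])
  moreover have "chinese_cong n ([n,n,x] @ replicate k n) ([n,x,n] @ replicate k n)"
    by (rule cong_appR[OF csym[OF letter_pair]]) (use assms in auto)
  ultimately show ?case by (auto intro: ctrans simp: replicate_app_Cons_same)
qed

lemma ins:
  assumes "1 \<le> x" "x \<le> m" "m < n"
  shows "chinese_cong n (pr n c m @ [n,x]) (pr n (c(x := Suc (c x))) m)"
  using assms
proof (induction m)
  case 0 then show ?case by simp
next
  case (Suc m)
  let ?c' = "c(x := Suc (c x))"
  show ?case
  proof (cases "x = Suc m")
    case True
    have e: "pr n ?c' m = pr n c m" by (rule pr_cong) (use True in auto)
    have "concat (replicate (c x) [n, x]) @ [n, x] = concat (replicate (Suc (c x)) [n, x])"
      by (metis concat.simps(1) concat.simps(2) concat_append replicate_Suc replicate_append_same self_append_conv)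
    moreover have "pr n ?c' (Suc m) = pr n ?c' m @ concat (replicate (?c' (Suc m)) [n, Suc m])"
      by (simp only: pr.simps)
    moreover have "?c' (Suc m) = Suc (c x)" using True by simp
    ultimately have "pr n ?c' (Suc m) = pr n c (Suc m) @ [n,x]" using True e by simp
    then show ?thesis by (metis chinese_cong.refl)
  next
    case False
    let ?R = "concat (replicate (c (Suc m)) [n, Suc m])"
    have e: "?c' (Suc m) = c (Suc m)" using False by simp
    have "chinese_cong n (pr n c m @ (?R @ [n,x])) (pr n c m @ ([n,x] @ ?R))"
      by (rule cong_appL[OF pair_rep]) (use Suc False in auto)
    moreover have "chinese_cong n ((pr n c m @ [n,x]) @ ?R) (pr n ?c' m @ ?R)"
      by (rule cong_appR[OF Suc.IH]) (use Suc False in auto)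
    ultimately have "chinese_cong n (pr n c m @ ?R @ [n,x]) (pr n ?c' m @ ?R)"
      by (auto intro: ctrans)
    moreover have eq: "pr n ?c' (Suc m) = pr n ?c' m @ ?R"
      by (simp only: pr.simps e)
    ultimately show ?thesis by (metis append_assoc pr.simps(2))
  qed
qed

lemma rep_comm: "concat (replicate k xs) @ xs = xs @ concat (replicate k xs)"
  by (induction k) auto

lemma extr:
  assumes "1 \<le> x" "x < n" "m < n"
  shows "\<exists>y c'. 1 \<le> y \<and> y < n \<and> chinese_cong n (pr n c m @ [x]) ([y] @ pr n c' m)"
  using assms
proof (induction m arbitrary: c x)
  case 0 then show ?case by (auto intro: chinese_cong.refl)
next
  case (Suc m)
  let ?R = "concat (replicate (c (Suc m)) [n, Suc m])"
  show ?case
  proof (cases "c (Suc m) = 0 \<or> Suc m \<le> x")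
    case True
    have RA: "chinese_cong n (?R @ [x]) ([x] @ ?R)"
    proof (cases "c (Suc m) = 0")
      case True then show ?thesis by (simp add: chinese_cong.refl)
    next
      case False
      then have "Suc m \<le> x" using \<open>c (Suc m) = 0 \<or> Suc m \<le> x\<close> by simp
      then show ?thesis by (intro letter_rep) (use Suc.prems in auto)
    qed
    obtain y c' where y: "1 \<le> y" "y < n" and cy: "chinese_cong n (pr n c m @ [x]) ([y] @ pr n c' m)"
      using Suc.IH[of x c] Suc.prems by auto
    define c'' where "c'' = c'(Suc m := c (Suc m))"
    have e1: "pr n c'' m = pr n c' m" by (rule pr_cong) (auto simp: c''_def)
    have e2: "pr n c'' (Suc m) = pr n c' m @ ?R"
      by (simp only: pr.simps e1) (simp add: c''_def)
    have s1: "chinese_cong n (pr n c m @ (?R @ [x])) (pr n c m @ ([x] @ ?R))"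
      by (rule cong_appL[OF RA])
    have s2: "chinese_cong n ((pr n c m @ [x]) @ ?R) (([y] @ pr n c' m) @ ?R)"
      by (rule cong_appR[OF cy])
    have "chinese_cong n (pr n c (Suc m) @ [x]) ([y] @ pr n c'' (Suc m))"
    proof -
      have a: "pr n c (Suc m) @ [x] = pr n c m @ (?R @ [x])" by simp
      have b: "pr n c m @ ([x] @ ?R) = (pr n c m @ [x]) @ ?R" by simp
      have d: "([y] @ pr n c' m) @ ?R = [y] @ pr n c'' (Suc m)" using e2 by simp
      show ?thesis unfolding a d[symmetric] using ctrans[OF s1 s2[folded b]] .
    qed
    then show ?thesis using y by blast
  next
    case False
    then obtain k where k: "c (Suc m) = Suc k" and xm: "x \<le> m"
      by (metis not0_implies_Suc not_less_eq_eq)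
    let ?R0 = "concat (replicate k [n, Suc m])"
    define c1 where "c1 = c(x := Suc (c x))"
    define c2 where "c2 = c1(Suc m := k)"
    have R: "concat (replicate (c (Suc m)) [n, Suc m]) = concat (replicate k [n, Suc m]) @ [n, Suc m]"
      using k rep_comm[of k "[n, Suc m]"] by simp
    have e1: "pr n c2 m = pr n c1 m" by (rule pr_cong) (auto simp: c2_def)
    have e2: "pr n c2 (Suc m) = pr n c1 m @ ?R0"
      by (simp only: pr.simps e1) (simp add: c2_def)
    have s1: "chinese_cong n ((pr n c m @ ?R0) @ [n, Suc m, x]) ((pr n c m @ ?R0) @ [n, x, Suc m])"
      by (rule cong_appL[OF r2]) (use Suc.prems xm in auto)
    have s2: "chinese_cong n ((pr n c m @ (?R0 @ [n,x])) @ [Suc m]) ((pr n c m @ ([n,x] @ ?R0)) @ [Suc m])"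
      by (rule cong_appR[OF cong_appL[OF pair_rep]]) (use Suc.prems xm in auto)
    have s3: "chinese_cong n (((pr n c m @ [n,x]) @ ?R0) @ [Suc m]) ((pr n c1 m @ ?R0) @ [Suc m])"
      unfolding c1_def by (rule cong_appR[OF cong_appR[OF ins]]) (use Suc.prems xm in auto)
    have s4: "chinese_cong n (pr n c2 (Suc m) @ [Suc m]) ([Suc m] @ pr n c2 (Suc m))"
      by (rule letter_pr) (use Suc.prems in auto)
    have "chinese_cong n (pr n c (Suc m) @ [x]) ([Suc m] @ pr n c2 (Suc m))"
    proof -
      have a: "pr n c (Suc m) @ [x] = (pr n c m @ ?R0) @ [n, Suc m, x]" using R by simp
      have b: "(pr n c m @ ?R0) @ [n, x, Suc m] = (pr n c m @ (?R0 @ [n,x])) @ [Suc m]" by simp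
      have c: "(pr n c m @ ([n,x] @ ?R0)) @ [Suc m] = ((pr n c m @ [n,x]) @ ?R0) @ [Suc m]" by simp
      have d: "(pr n c1 m @ ?R0) @ [Suc m] = pr n c2 (Suc m) @ [Suc m]" using e2 by simp
      show ?thesis unfolding a
        using ctrans[OF ctrans[OF ctrans[OF s1[unfolded b] s2[unfolded c]] s3[unfolded d]] s4] .
    qed
    then show ?thesis using Suc.prems by (intro exI[of _ "Suc m"] exI[of _ c2]) auto
  qed
qed

lemma nf_exists:
  assumes "set w \<subseteq> {1..n}" "1 \<le> n"
  shows "\<exists>u c k. set u \<subseteq> {1..<n} \<and> chinese_cong n w (u @ pr n c (n - 1) @ replicate k n)"
  using assms(1)
proof (induction w rule: rev_induct)
  case Nil
  show ?case by (intro exI[of _ "[]"] exI[of _ "\<lambda>_. 0"] exI[of _ 0]) (simp add: pr_zero chinese_cong.refl)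
next
  case (snoc x w)
  then obtain u c k where u: "set u \<subseteq> {1..<n}" and cw: "chinese_cong n w (u @ pr n c (n - 1) @ replicate k n)"
    by auto
  have x: "1 \<le> x" "x \<le> n" using snoc.prems by auto
  have c0: "chinese_cong n (w @ [x]) ((u @ pr n c (n - 1) @ replicate k n) @ [x])"
    by (rule cong_appR[OF cw])
  show ?case
  proof (cases "x = n")
    case True
    have "(u @ pr n c (n - 1) @ replicate k n) @ [x] = u @ pr n c (n - 1) @ replicate (Suc k) n"
      using True by (simp add: replicate_append_same)
    then show ?thesis using c0 u by metis
  next
    case False
    then have xn: "x < n" using x by simp
    show ?thesis
    proof (cases k)
      case (Suc k')
      have a: "(u @ pr n c (n - 1) @ replicate k n) @ [x] = (u @ pr n c (n - 1)) @ (replicate k' n @ [n,x])"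
        using Suc by (simp add: replicate_append_same[symmetric])
      have s1: "chinese_cong n ((u @ pr n c (n - 1)) @ (replicate k' n @ [n,x])) ((u @ pr n c (n - 1)) @ ([n,x] @ replicate k' n))"
        by (rule cong_appL[OF n_rep]) (use x in auto)
      have s2: "chinese_cong n (u @ (pr n c (n - 1) @ [n,x]) @ replicate k' n) (u @ pr n (c(x := Suc (c x))) (n - 1) @ replicate k' n)"
        by (rule cong_app[OF ins]) (use x xn in auto)
      have e: "(u @ pr n c (n - 1)) @ ([n,x] @ replicate k' n) = u @ (pr n c (n - 1) @ [n,x]) @ replicate k' n" by simp
      have "chinese_cong n (w @ [x]) (u @ pr n (c(x := Suc (c x))) (n - 1) @ replicate k' n)"
        using ctrans[OF ctrans[OF c0[unfolded a] s1[unfolded e]] s2] .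
      then show ?thesis using u by blast
    next
      case 0
      obtain y c' where y: "1 \<le> y" "y < n" and cy: "chinese_cong n (pr n c (n - 1) @ [x]) ([y] @ pr n c' (n - 1))"
        using extr[of x n "n - 1" c] x xn by auto
      have s1: "chinese_cong n (u @ (pr n c (n - 1) @ [x])) (u @ ([y] @ pr n c' (n - 1)))"
        by (rule cong_appL[OF cy])
      have "chinese_cong n (w @ [x]) ((u @ [y]) @ pr n c' (n - 1) @ replicate 0 n)"
      proof -
        have c0': "chinese_cong n (w @ [x]) (u @ (pr n c (n - 1) @ [x]))" using c0 0 by simp
        show ?thesis using ctrans[OF c0' s1] by simp
      qed
      moreover have "set (u @ [y]) \<subseteq> {1..<n}" using u y by auto
      ultimately show ?thesis by blast
    qed
  qed
qed

definition sg :: "nat \<Rightarrow> nat \<Rightarrow> nat \<Rightarrow> int" where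
  "sg p q x = (if x \<le> p then 1 else if q \<le> x then -1 else 0)"

fun hh :: "nat \<Rightarrow> nat \<Rightarrow> nat list \<Rightarrow> int" where
  "hh p q [] = 0"
| "hh p q (x # xs) = sg p q x + hh p q xs"

fun HH :: "nat \<Rightarrow> nat \<Rightarrow> nat list \<Rightarrow> int" where
  "HH p q [] = 0"
| "HH p q (x # xs) = max 0 (sg p q x + HH p q xs)"

lemma HH_nonneg: "0 \<le> HH p q w"
  by (cases w) auto

lemma hh_le_HH: "hh p q w \<le> HH p q w"
  by (induction w) auto

lemma hh_append: "hh p q (a @ b) = hh p q a + hh p q b"
  by (induction a) auto

lemma HH_append: "HH p q (a @ b) = max (HH p q a) (hh p q a + HH p q b)"
proof (induction a)
  case Nil then show ?case using HH_nonneg[of p q b] by simp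
next
  case (Cons x a) then show ?case by (simp add: max_def)
qed

lemma sg_mono: "x \<le> y \<Longrightarrow> sg p q y \<le> sg p q x"
  by (auto simp: sg_def)

lemma sg_range: "sg p q x \<in> {-1, 0, 1}"
  by (auto simp: sg_def)

lemma tri3:
  fixes a b c Z :: int
  assumes "a \<in> {-1,0,1}" "b \<in> {-1,0,1}" "c \<in> {-1,0,1}" "c \<le> a" "b \<le> c" "0 \<le> Z"
  shows "max 0 (c + max 0 (b + max 0 (a + Z))) = max 0 (b + max 0 (c + max 0 (a + Z)))"
    and "max 0 (b + max 0 (c + max 0 (a + Z))) = max 0 (b + max 0 (a + max 0 (c + Z)))"
  using assms by (auto simp: max_def)

lemma HH_rel:
  assumes "i \<le> j" "j \<le> k"
  shows "HH p q ([j,k,i] @ r) = HH p q ([k,j,i] @ r)"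
    and "HH p q ([k,j,i] @ r) = HH p q ([k,i,j] @ r)"
  using tri3[OF sg_range[of p q i] sg_range[of p q k] sg_range[of p q j]
      sg_mono[OF assms(1)] sg_mono[OF assms(2)] HH_nonneg[of p q r]]
  by simp_all

lemma HH_ctx: "(\<And>r. HH p q (X @ r) = HH p q (Y @ r)) \<Longrightarrow> HH p q (pre @ X @ r) = HH p q (pre @ Y @ r)"
  by (induction pre) auto

lemma HH_cong: "chinese_cong n w w' \<Longrightarrow> HH p q w = HH p q w'"
proof (induction rule: chinese_cong.induct)
  case (rel1 i j k pa qa)
  show ?case by (rule HH_ctx) (use HH_rel rel1 in auto)
next
  case (rel2 i j k pa qa)
  show ?case by (rule HH_ctx) (use HH_rel rel2 in auto)
qed auto

definition Lc :: "nat \<Rightarrow> nat list \<Rightarrow> nat" where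
  "Lc p w = length (filter (\<lambda>x. x \<le> p) w)"

lemma HH_low: "(\<forall>x\<in>set w. x < q) \<Longrightarrow> HH p q w = int (Lc p w)"
  by (induction w) (auto simp: Lc_def sg_def)

lemma HH_same: "(\<forall>x\<in>set w. sg p q x = sg p' q' x) \<Longrightarrow> HH p q w = HH p' q' w"
  by (induction w) auto

lemma HH_rep: "p < q \<Longrightarrow> q \<le> n \<Longrightarrow> HH p q (replicate k n) = 0"
  by (induction k) (auto simp: sg_def)

lemma HH_pairs: "p < q \<Longrightarrow> q \<le> n \<Longrightarrow> HH p q r = 0 \<Longrightarrow> HH p q (concat (replicate k [n, j]) @ r) = 0"
  by (induction k) (auto simp: sg_def max_def)

lemma HH_pr: "p < q \<Longrightarrow> q \<le> n \<Longrightarrow> HH p q r = 0 \<Longrightarrow> HH p q (pr n c m @ r) = 0"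
proof (induction m arbitrary: r)
  case 0 then show ?case by simp
next
  case (Suc m)
  have "HH p q (concat (replicate (c (Suc m)) [n, Suc m]) @ r) = 0"
    using HH_pairs Suc.prems by blast
  then show ?case using Suc.IH[of "concat (replicate (c (Suc m)) [n, Suc m]) @ r"] Suc.prems by simp
qed

lemma HH_B: "p < q \<Longrightarrow> q \<le> n \<Longrightarrow> HH p q (u @ pr n c m @ replicate k n) = HH p q u"
proof -
  assume q: "p < q" "q \<le> n"
  have "HH p q (pr n c m @ replicate k n) = 0" using HH_pr HH_rep q by blast
  then show ?thesis using HH_append[of p q u] hh_le_HH[of p q u] by simp
qed

lemma set_pr: "x \<in> set (pr n c m) \<Longrightarrow> x = n \<or> (1 \<le> x \<and> x \<le> m)"
  by (induction m) (auto simp: set_replicate_conv_if split: if_splits)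

lemma Lc_append: "Lc p (a @ b) = Lc p a + Lc p b"
  by (simp add: Lc_def)

lemma Lc_pairs: "Lc p (concat (replicate k [n, j])) = k * ((if n \<le> p then 1 else 0) + (if j \<le> p then 1 else 0))"
  by (induction k) (auto simp: Lc_def)

lemma Lc_pr_eq: "(\<forall>x\<in>set w. x \<le> p \<longleftrightarrow> x \<le> p') \<Longrightarrow> Lc p w = Lc p' w"
  unfolding Lc_def by (metis filter_cong)

lemma pr_det:
  assumes "m < N" "\<forall>p<N. Lc p (pr N c m) = Lc p (pr N c' m)"
  shows "pr N c m = pr N c' m"
  using assms
proof (induction m)
  case 0 then show ?case by simp
next
  case (Suc m)
  let ?B = "\<lambda>c. concat (replicate (c (Suc m)) [N, Suc m])"
  have L1: "Lc (Suc m) (pr N d (Suc m)) = Lc m (pr N d m) + d (Suc m)" for d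
  proof -
    have "Lc (Suc m) (pr N d m) = Lc m (pr N d m)"
      by (rule Lc_pr_eq) (use set_pr Suc.prems in fastforce)
    then show ?thesis using Suc.prems by (simp add: Lc_append Lc_pairs)
  qed
  have L2: "Lc p (pr N d (Suc m)) = Lc p (pr N d m)" if "p \<le> m" for d p
    using that Suc.prems by (simp add: Lc_append Lc_pairs)
  have L3: "Lc p (pr N d m) = Lc m (pr N d m)" if "m \<le> p" "p < N" for d p
    by (rule Lc_pr_eq) (use set_pr that in fastforce)
  have hyp: "\<forall>p<N. Lc p (pr N c m) = Lc p (pr N c' m)"
  proof (intro allI impI)
    fix p assume p: "p < N"
    show "Lc p (pr N c m) = Lc p (pr N c' m)"
    proof (cases "p \<le> m")
      case True then show ?thesis using L2[OF True] Suc.prems p by metis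
    next
      case False
      then have "m \<le> p" by simp
      moreover have "Lc m (pr N c m) = Lc m (pr N c' m)" using L2[of m] Suc.prems by (metis le_refl Suc_lessD)
      ultimately show ?thesis using L3 p by metis
    qed
  qed
  have e: "pr N c m = pr N c' m" using Suc.IH hyp Suc.prems by simp
  have "c (Suc m) = c' (Suc m)"
    using L1[of c] L1[of c'] e Suc.prems by (metis Suc_lessD add_left_cancel)
  then show ?case using e by simp
qed

lemma Lc_rep: "Lc p (replicate k N) = (if N \<le> p then k else 0)"
  by (induction k) (auto simp: Lc_def)

lemma complete:
  "set w \<subseteq> {1..n} \<Longrightarrow> set w' \<subseteq> {1..n} \<Longrightarrow> \<forall>p q. HH p q w = HH p q w' \<Longrightarrow> chinese_cong n w w'"
proof (induction n arbitrary: w w')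
  case 0
  then have "w = []" "w' = []" by auto
  then show ?case by (simp add: chinese_cong.refl)
next
  case (Suc n)
  define N where "N = Suc n"
  obtain u c k where u: "set u \<subseteq> {1..<N}" and cw: "chinese_cong N w (u @ pr N c n @ replicate k N)"
    using nf_exists[of w N] Suc.prems unfolding N_def by auto
  obtain u' c' k' where u': "set u' \<subseteq> {1..<N}" and cw': "chinese_cong N w' (u' @ pr N c' n @ replicate k' N)"
    using nf_exists[of w' N] Suc.prems unfolding N_def by auto
  define B where "B = pr N c n @ replicate k N"
  define B' where "B' = pr N c' n @ replicate k' N"
  have inv: "HH p q (u @ B) = HH p q (u' @ B')" for p q
    using HH_cong[OF cw, of p q] HH_cong[OF cw', of p q] Suc.prems(3) unfolding B_def B'_def by metis
  have A: "HH p q u = HH p q u'" if "p < q" "q \<le> N" for p q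
    using inv[of p q] HH_B[OF that, of u c n k] HH_B[OF that, of u' c' n k'] unfolding B_def B'_def by metis
  have A2: "HH p q u = HH p q u'" if pq: "p < q" for p q
  proof (cases "q \<le> N")
    case True then show ?thesis using A pq by blast
  next
    case False
    define p' where "p' = min p n"
    have s: "\<forall>x\<in>set v. sg p q x = sg p' N x" if "set v \<subseteq> {1..<N}" for v
      using that False unfolding sg_def p'_def N_def by auto
    have "HH p q u = HH p' N u" by (rule HH_same) (use s u in blast)
    moreover have "HH p q u' = HH p' N u'" by (rule HH_same) (use s u' in blast)
    moreover have "p' < N" unfolding p'_def N_def by simp
    ultimately show ?thesis using A by simp
  qed
  have allu: "\<forall>p q. HH p q u = HH p q u'"
  proof (intro allI)
    fix p q
    show "HH p q u = HH p q u'"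
    proof (cases "p < q")
      case True then show ?thesis using A2 by blast
    next
      case False
      have s: "\<forall>x\<in>set v. sg p q x = sg p (Suc p) x" for v
        using False unfolding sg_def by auto
      have "HH p q u = HH p (Suc p) u" by (rule HH_same) (use s in blast)
      moreover have "HH p q u' = HH p (Suc p) u'" by (rule HH_same) (use s in blast)
      ultimately show ?thesis using A2[of p "Suc p"] by simp
    qed
  qed
  have "{1..<N} = {1..n}" unfolding N_def by auto
  then have uu: "chinese_cong n u u'"
    using Suc.IH[of u u'] u u' allu by simp
  have uuN: "chinese_cong N u u'" using cong_mono[OF uu] unfolding N_def by simp
  have setB: "\<forall>x\<in>set B. x < Suc N" "\<forall>x\<in>set B'. x < Suc N"
    unfolding B_def B'_def N_def using set_pr by fastforce+
  have Lu: "Lc p u = Lc p u'" for p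
  proof -
    have "HH p (Suc N) u = int (Lc p u)" by (rule HH_low) (use u in auto)
    moreover have "HH p (Suc N) u' = int (Lc p u')" by (rule HH_low) (use u' in auto)
    ultimately show ?thesis using allu by simp
  qed
  have LB: "Lc p B = Lc p B'" for p
  proof -
    have "HH p (Suc N) (u @ B) = int (Lc p (u @ B))" by (rule HH_low) (use u setB in auto)
    moreover have "HH p (Suc N) (u' @ B') = int (Lc p (u' @ B'))" by (rule HH_low) (use u' setB in auto)
    ultimately have "Lc p (u @ B) = Lc p (u' @ B')" using inv by simp
    then show ?thesis using Lu[of p] by (simp add: Lc_append)
  qed
  have prq: "pr N c n = pr N c' n"
  proof (rule pr_det)
    show "n < N" unfolding N_def by simp
    show "\<forall>p<N. Lc p (pr N c n) = Lc p (pr N c' n)"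
    proof (intro allI impI)
      fix p assume "p < N"
      then show "Lc p (pr N c n) = Lc p (pr N c' n)"
        using LB[of p] unfolding B_def B'_def by (simp add: Lc_append Lc_rep)
    qed
  qed
  have "k = k'" using LB[of N] prq unfolding B_def B'_def by (simp add: Lc_append Lc_rep)
  then have BB: "B = B'" unfolding B_def B'_def using prq by simp
  have "chinese_cong N (u @ B) (u' @ B')" using cong_appR[OF uuN] BB by simp
  then have "chinese_cong N w w'"
    using cw cw' unfolding B_def B'_def by (meson ctrans csym)
  then show ?case unfolding N_def .
qed

definition tri :: "real \<Rightarrow> trop \<Rightarrow> tmat2" where
  "tri a b = TM (Fin a) b NegInf (Fin 0)"

lemma tri_mult: "tmat_mult (tri a b) (tri a' b') = tri (a + a') (tadd (tmul (Fin a) b') b)"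
  by (cases b; cases b') (auto simp: tri_def)

definition Hopt :: "nat \<Rightarrow> nat \<Rightarrow> nat list \<Rightarrow> trop" where
  "Hopt p q w = (if w = [] then NegInf else Fin (of_int (HH p q w)))"

lemma Hopt_app:
  "Hopt p q (A @ B) = tadd (tmul (Fin (of_int (hh p q A))) (Hopt p q B)) (Hopt p q A)"
proof (cases "A = []")
  case True then show ?thesis by (cases "Hopt p q B") (auto simp: Hopt_def)
next
  case False
  show ?thesis
  proof (cases "B = []")
    case True then show ?thesis using False by (simp add: Hopt_def)
  next
    case False
    have "HH p q (A @ B) = max (HH p q A) (hh p q A + HH p q B)" by (rule HH_append)
    then have "real_of_int (HH p q (A @ B)) = max (of_int (hh p q A) + of_int (HH p q B)) (of_int (HH p q A))"
      by (simp add: max.commute)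
    then show ?thesis using False \<open>A \<noteq> []\<close> by (simp add: Hopt_def)
  qed
qed

lemma eval_tri:
  "u \<noteq> [] \<Longrightarrow> eval_tmat (\<lambda>x. tri (of_int (hh p q (\<sigma> x))) (Hopt p q (\<sigma> x))) u
     = tri (of_int (hh p q (concat (map \<sigma> u)))) (Hopt p q (concat (map \<sigma> u)))"
proof (induction u rule: induct_list012)
  case 1 then show ?case by simp
next
  case (2 x) then show ?case by simp
next
  case (3 x y zs)
  then show ?case by (simp add: tri_mult Hopt_app[symmetric] hh_append)
qed

lemma Hopt_inj: "Hopt p q A = Hopt p q B \<Longrightarrow> HH p q A = HH p q B"
  by (cases A; cases B) (auto simp: Hopt_def)

lemma tri_U2T: "tri a b \<in> U2T"
  unfolding tri_def U2T_def by blast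

lemma U2T_HH:
  assumes "U2T_satisfies u v" "u \<noteq> []" "v \<noteq> []"
  shows "HH p q (concat (map \<sigma> u)) = HH p q (concat (map \<sigma> v))"
proof -
  let ?phi = "\<lambda>x. tri (of_int (hh p q (\<sigma> x))) (Hopt p q (\<sigma> x))"
  have "eval_tmat ?phi u = eval_tmat ?phi v"
  proof -
    have "\<forall>phi. (\<forall>x. phi x \<in> U2T) \<longrightarrow> eval_tmat phi u = eval_tmat phi v"
      using assms(1) unfolding U2T_satisfies_def .
    then have "(\<forall>x. ?phi x \<in> U2T) \<longrightarrow> eval_tmat ?phi u = eval_tmat ?phi v" by (rule spec)
    then show ?thesis using tri_U2T by blast
  qed
  then have "Hopt p q (concat (map \<sigma> u)) = Hopt p q (concat (map \<sigma> v))"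
    using eval_tri[OF assms(2), of p q \<sigma>] eval_tri[OF assms(3), of p q \<sigma>] by (simp add: tri_def)
  then show ?thesis by (rule Hopt_inj)
qed

theorem corollaryI:
  fixes n :: nat and u v :: "'a list"
  assumes "n \<ge> 1" and "u \<noteq> []" and "v \<noteq> []"
    and "U2T_satisfies u v"
  shows "chinese_satisfies n u v"
  unfolding chinese_satisfies_def
proof (intro allI impI)
  fix \<sigma> :: "'a \<Rightarrow> nat list"
  assume s: "\<forall>x. set (\<sigma> x) \<subseteq> {1..n}"
  show "chinese_cong n (concat (map \<sigma> u)) (concat (map \<sigma> v))"
  proof (rule complete)
    show "set (concat (map \<sigma> u)) \<subseteq> {1..n}" using s by auto
    show "set (concat (map \<sigma> v)) \<subseteq> {1..n}" using s by auto
    show "\<forall>p q. HH p q (concat (map \<sigma> u)) = HH p q (concat (map \<sigma> v))"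
      using U2T_HH[OF assms(4) assms(2) assms(3)] by blast
  qed
qed

end
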